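(* There exists a language which is accepted by a GRLOWJFA but not by any ROWJFA, and hence ROWJ ⊂ GRLOWJ (proper inclusion).
   Context: A right one-way jumping finite automaton (ROWJFA) is a tuple A = (Σ, Q, q_0, F, R) with alphabet Σ, finite state set Q, start state q_0, final states F ⊆ Q, and rules R ⊆ Q × Σ × Q such that for each p ∈ Q and a ∈ Σ there is at most one q with (p,a,q) ∈ R. For p ∈ Q let Σ_p = {b ∈ Σ : (p,b,q) ∈ R for some q}. Configurations are strings in QΣ^*; for (p,a,q) ∈ R, x ∈ (Σ \ Σ_p)^* and y ∈ Σ^*, the automaton moves from pxay to qyx. The accepted language is the set of words w with q_0 w ⇒^* q_f for some q_f ∈ F. A generalized right linear one-way jumping finite automaton (GRLOWJFA) is a tuple A = (Σ, Q, q_0, F, R) where R ⊂ Q × Σ^+ × Q is finite and for each p ∈ Q and w ∈ Σ^+ there is at most one q with (p,w,q) ∈ R (rule (p,w,q): from p, delete w, go to q). For p ∈ Q let Σ_p = {w ∈ Σ^+ : (p,w,q) ∈ R for some q}. Configurations are strings in Σ^* Q Σ^*, and the moves are: (1) for t,u,v ∈ Σ^* and (p,x,q) ∈ R, tpuxv ⇒ tuqv, provided u contains no word of Σ_p as a subword and there is no nonempty suffix u_2 of u and nonempty prefix x_1 of x with u_2x_1 = x; (2) for x ∈ Σ^+ and y ∈ Σ^* such that y contains no word of Σ_p as a subword, xpy ⇒ pxy. The accepted language is {w ∈ Σ^* : q_0 w ⇒^* q_f for some q_f ∈ F}. ROWJ and GRLOWJ denote the classes of languages accepted by ROWJFA and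 GRLOWJFA respectively. A ROWJFA is exactly a GRLOWJFA all of whose rules delete words of length 1, so ROWJ ⊆ GRLOWJ. *)

theory Defs
  imports Main "HOL-Library.Sublist"
begin

record ('a, 'q) rowjfa =
  r_alph   :: "'a set"
  r_states :: "'q set"
  r_start  :: "'q"
  r_finals :: "'q set"
  r_rules  :: "('q \<times> 'a \<times> 'q) set"

definition rowjfa_wf :: "('a, 'q) rowjfa \<Rightarrow> bool" where
  "rowjfa_wf A \<longleftrightarrow>
     finite (r_alph A) \<and> finite (r_states A) \<and> r_start A \<in> r_states A \<and>
     r_finals A \<subseteq> r_states A \<and>
     r_rules A \<subseteq> r_states A \<times> r_alph A \<times> r_states A \<and>
     (\<forall>p a q q'. (p, a, q) \<in> r_rules A \<longrightarrow> (p, a, q') \<in> r_rules A \<longrightarrow> q = q')"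

definition r_sigma :: "('a, 'q) rowjfa \<Rightarrow> 'q \<Rightarrow> 'a set" where
  "r_sigma A p = {b. \<exists>q. (p, b, q) \<in> r_rules A}"

inductive rowj_step :: "('a, 'q) rowjfa \<Rightarrow> 'q \<times> 'a list \<Rightarrow> 'q \<times> 'a list \<Rightarrow> bool"
  for A where
  "(p, a, q) \<in> r_rules A \<Longrightarrow> set x \<subseteq> r_alph A - r_sigma A p \<Longrightarrow>
   rowj_step A (p, x @ a # y) (q, y @ x)"

definition rowj_lang :: "('a, 'q) rowjfa \<Rightarrow> 'a list set" where
  "rowj_lang A = {w. w \<in> lists (r_alph A) \<and>
      (\<exists>qf \<in> r_finals A. (rowj_step A)\<^sup>*\<^sup>* (r_start A, w) (qf, []))}"

record ('a, 'q) grlowjfa =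
  g_alph   :: "'a set"
  g_states :: "'q set"
  g_start  :: "'q"
  g_finals :: "'q set"
  g_rules  :: "('q \<times> 'a list \<times> 'q) set"

definition grlowjfa_wf :: "('a, 'q) grlowjfa \<Rightarrow> bool" where
  "grlowjfa_wf A \<longleftrightarrow>
     finite (g_alph A) \<and> finite (g_states A) \<and> g_start A \<in> g_states A \<and>
     g_finals A \<subseteq> g_states A \<and> finite (g_rules A) \<and>
     (\<forall>(p, w, q) \<in> g_rules A. p \<in> g_states A \<and> q \<in> g_states A \<and>
        w \<noteq> [] \<and> w \<in> lists (g_alph A)) \<and>
     (\<forall>p w q q'. (p, w, q) \<in> g_rules A \<longrightarrow> (p, w, q') \<in> g_rules A \<longrightarrow> q = q')"

definition g_sigma :: "('a, 'q) grlowjfa \<Rightarrow> 'q \<Rightarrow> 'a list set" where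
  "g_sigma A p = {w. \<exists>q. (p, w, q) \<in> g_rules A}"

definition avoids :: "('a, 'q) grlowjfa \<Rightarrow> 'q \<Rightarrow> 'a list \<Rightarrow> bool" where
  "avoids A p u \<longleftrightarrow> (\<forall>w \<in> g_sigma A p. \<not> sublist w u)"

inductive grlowj_step :: "('a, 'q) grlowjfa \<Rightarrow> 'a list \<times> 'q \<times> 'a list \<Rightarrow>
    'a list \<times> 'q \<times> 'a list \<Rightarrow> bool" for A where
  jump: "(p, x, q) \<in> g_rules A \<Longrightarrow> avoids A p u \<Longrightarrow>
   \<not> (\<exists>u2 x1. u2 \<noteq> [] \<and> x1 \<noteq> [] \<and> suffix u2 u \<and> prefix x1 x \<and> u2 @ x1 = x) \<Longrightarrow>
   grlowj_step A (t, p, u @ x @ v) (t @ u, q, v)"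
| wrap: "x \<noteq> [] \<Longrightarrow> avoids A p y \<Longrightarrow> grlowj_step A (x, p, y) ([], p, x @ y)"

definition grlowj_lang :: "('a, 'q) grlowjfa \<Rightarrow> 'a list set" where
  "grlowj_lang A = {w. w \<in> lists (g_alph A) \<and>
      (\<exists>qf \<in> g_finals A. (grlowj_step A)\<^sup>*\<^sup>* ([], g_start A, w) ([], qf, []))}"

definition ROWJ :: "'a list set set" where
  "ROWJ = {L. \<exists>A :: ('a, nat) rowjfa. rowjfa_wf A \<and> L = rowj_lang A}"

definition GRLOWJ :: "'a list set set" where
  "GRLOWJ = {L. \<exists>A :: ('a, nat) grlowjfa. grlowjfa_wf A \<and> L = grlowj_lang A}"

end

theory Submission
  imports Defs
begin

lemma sublist_single: "sublist [c] u \<longleftrightarrow> c \<in> set u"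
proof
  assume "sublist [c] u" thus "c \<in> set u" using set_mono_sublist by fastforce
next
  assume "c \<in> set u"
  then obtain p s where "u = p @ c # s" by (meson split_list)
  thus "sublist [c] u" unfolding sublist_def by (metis append.assoc append_Cons append_Nil)
qed

section \<open>The witness automaton\<close>

definition G1 :: "(nat, nat) grlowjfa" where
  "G1 = \<lparr>g_alph = {0,1}, g_states = {0}, g_start = 0, g_finals = {0},
         g_rules = {(0, [0,1], 0)}\<rparr>"

lemma G1_wf: "grlowjfa_wf G1"
  unfolding grlowjfa_wf_def G1_def by auto

lemma G1_sigma: "g_sigma G1 p \<subseteq> {[0,1]}"
  unfolding g_sigma_def G1_def by auto

lemma G1_avoids: "1 \<notin> set u \<Longrightarrow> avoids G1 p u"
  unfolding avoids_def using G1_sigma set_mono_sublist by fastforce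

lemma G1_avoids0: "0 \<notin> set u \<Longrightarrow> avoids G1 p u"
  unfolding avoids_def using G1_sigma set_mono_sublist by fastforce

lemma G1_acc: "(grlowj_step G1)\<^sup>*\<^sup>* ([], 0, replicate n 0 @ replicate n (1::nat)) ([], 0, [])"
proof (induction n)
  case 0 then show ?case by simp
next
  case (Suc n)
  have r: "(0::nat, [0::nat,1], 0::nat) \<in> g_rules G1" by (simp add: G1_def)
  have ov: "\<not> (\<exists>u2 x1. u2 \<noteq> [] \<and> x1 \<noteq> [] \<and> suffix u2 (replicate n (0::nat)) \<and> prefix x1 [0::nat,1] \<and> u2 @ x1 = [0,1])"
  proof
    assume "\<exists>u2 x1. u2 \<noteq> [] \<and> x1 \<noteq> [] \<and> suffix u2 (replicate n (0::nat)) \<and> prefix x1 [0::nat,1] \<and> u2 @ x1 = [0,1]"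
    then obtain u2 x1 where h: "u2 \<noteq> []" "x1 \<noteq> []" "prefix x1 [0::nat,1]" "u2 @ x1 = [0,1]" by blast
    then have "x1 = [1]" by (cases u2) (auto simp: append_eq_Cons_conv Cons_eq_append_conv)
    with h(3) show False by simp
  qed
  have "grlowj_step G1 ([], 0, replicate n 0 @ [0,1] @ replicate n 1) ([] @ replicate n 0, 0, replicate n 1)"
    by (rule grlowj_step.jump[OF r G1_avoids ov]) simp
  moreover have "replicate (Suc n) 0 @ replicate (Suc n) (1::nat) = replicate n 0 @ [0,1] @ replicate n 1"
    by (simp add: replicate_app_Cons_same)
  ultimately have s1: "grlowj_step G1 ([], 0, replicate (Suc n) 0 @ replicate (Suc n) (1::nat)) (replicate n 0, 0, replicate n 1)"
    by simp
  show ?case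
  proof (cases n)
    case 0
    with s1 show ?thesis by simp
  next
    case (Suc m)
    have "grlowj_step G1 (replicate n 0, 0, replicate n 1) ([], 0, replicate n 0 @ replicate n (1::nat))"
      by (rule grlowj_step.wrap) (auto simp: Suc intro: G1_avoids0)
    with s1 Suc.IH show ?thesis
      by (meson converse_rtranclp_into_rtranclp)
  qed
qed

definition ca :: "nat list \<Rightarrow> nat" where "ca w = length (filter (\<lambda>x. x = 0) w)"
definition cb :: "nat list \<Rightarrow> nat" where "cb w = length (filter (\<lambda>x. x = 1) w)"

definition bad :: "nat list \<Rightarrow> bool" where
  "bad w \<longleftrightarrow> ca w \<noteq> cb w \<or> (\<exists>r. prefix r w \<and> ca r < cb r)"

lemma bad_del: "bad (p @ [0,1] @ s) \<Longrightarrow> bad (p @ s)"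
proof -
  assume h: "bad (p @ [0,1] @ s)"
  show ?thesis
  proof (cases "ca (p @ [0,1] @ s) \<noteq> cb (p @ [0,1] @ s)")
    case True then show ?thesis by (auto simp: bad_def ca_def cb_def)
  next
    case False
    with h obtain r where r: "prefix r (p @ [0,1] @ s)" "ca r < cb r" by (auto simp: bad_def)
    from r(1) consider "prefix r p" | us where "r = p @ us" "prefix us ([0,1] @ s)"
      by (auto simp: prefix_append)
    then show ?thesis
    proof cases
      case 1 then show ?thesis using r(2) by (auto simp: bad_def intro: prefix_prefix)
    next
      case 2
      from 2(2) consider "us = []" | "us = [0]" | vs where "us = [0,1] @ vs" "prefix vs s"
        by (cases us; auto simp: Cons_prefix_Cons prefix_Cons split: list.splits)
      then show ?thesis
      proof cases
        case 1 then show ?thesis using r(2) 2(1) by (auto simp: bad_def intro!: exI[of _ p])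
      next
        case 2 then show ?thesis using r(2) `r = p @ us`
          by (auto simp: bad_def ca_def cb_def intro!: exI[of _ p])
      next
        case 3 then show ?thesis using r(2) `r = p @ us`
          by (auto simp: bad_def ca_def cb_def intro!: exI[of _ "p @ vs"])
      qed
    qed
  qed
qed

lemma G1_step_bad: "grlowj_step G1 c c' \<Longrightarrow> bad (fst c @ snd (snd c)) \<Longrightarrow> bad (fst c' @ snd (snd c'))"
proof (induction rule: grlowj_step.induct)
  case (jump p x q u t v)
  then have "x = [0,1]" by (simp add: G1_def)
  with jump show ?case using bad_del[of "t @ u" v] by simp
next
  case (wrap x p y) then show ?case by simp
qed

lemma G1_star_bad: "(grlowj_step G1)\<^sup>*\<^sup>* c c' \<Longrightarrow> bad (fst c @ snd (snd c)) \<Longrightarrow> bad (fst c' @ snd (snd c'))"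
  by (induction rule: rtranclp_induct) (auto intro: G1_step_bad)

lemma G1_rej: "bad w \<Longrightarrow> w \<notin> grlowj_lang G1"
proof
  assume b: "bad w" and "w \<in> grlowj_lang G1"
  then have "(grlowj_step G1)\<^sup>*\<^sup>* ([], 0, w) ([], 0, [])" by (auto simp: grlowj_lang_def G1_def)
  from G1_star_bad[OF this] b have "bad []" by simp
  thus False by (simp add: bad_def ca_def cb_def)
qed

lemma L_in: "replicate n 0 @ replicate n 1 \<in> grlowj_lang G1"
  using G1_acc[of n] by (auto simp: grlowj_lang_def G1_def)

lemma L_out1: "j \<noteq> i \<Longrightarrow> replicate j 0 @ replicate i 1 \<notin> grlowj_lang G1"
  by (rule G1_rej) (simp add: bad_def ca_def cb_def filter_replicate)

lemma L_out2: "replicate i 0 @ replicate (Suc i) 1 @ [0] \<notin> grlowj_lang G1"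
  apply (rule G1_rej)
  unfolding bad_def
  apply (rule disjI2)
  apply (rule exI[of _ "replicate i 0 @ replicate (Suc i) 1"])
  by (simp add: ca_def cb_def filter_replicate)

definition racc :: "('a, 'q) rowjfa \<Rightarrow> 'q \<Rightarrow> 'a list \<Rightarrow> bool" where
  "racc A p z \<longleftrightarrow> (\<exists>qf \<in> r_finals A. (rowj_step A)\<^sup>*\<^sup>* (p, z) (qf, []))"

lemma racc_Cons_step:
  assumes "z \<noteq> []"
  shows "racc A p z \<longleftrightarrow> (\<exists>c. rowj_step A (p, z) c \<and> racc A (fst c) (snd c))"
proof
  assume "racc A p z"
  then obtain qf where qf: "qf \<in> r_finals A" "(rowj_step A)\<^sup>*\<^sup>* (p, z) (qf, [])" by (auto simp: racc_def)
  from qf(2) assms show "\<exists>c. rowj_step A (p, z) c \<and> racc A (fst c) (snd c)"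
    by (cases rule: converse_rtranclpE) (use qf(1) in \<open>auto simp: racc_def\<close>)
next
  assume "\<exists>c. rowj_step A (p, z) c \<and> racc A (fst c) (snd c)"
  then show "racc A p z"
    by (auto simp: racc_def intro: converse_rtranclp_into_rtranclp)
qed

lemma step_same:
  assumes "\<And>c. rowj_step A (p, w1) c \<longleftrightarrow> rowj_step A (p, w2) c" "w1 \<noteq> []" "w2 \<noteq> []"
  shows "racc A p w1 \<longleftrightarrow> racc A p w2"
  using assms by (simp add: racc_Cons_step)

lemma rot_step:
  assumes a: "a \<notin> r_sigma A p" "a \<in> r_alph A"
  shows "rowj_step A (p, a # z) c \<longleftrightarrow> rowj_step A (p, z @ [a]) c"
proof
  assume "rowj_step A (p, a # z) c"
  then obtain x b y q where h: "(p, b, q) \<in> r_rules A" "set x \<subseteq> r_alph A - r_sigma A p"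
    "a # z = x @ b # y" "c = (q, y @ x)" by (cases rule: rowj_step.cases) auto
  have "b \<in> r_sigma A p" using h(1) by (auto simp: r_sigma_def)
  with a h(3) obtain x' where x': "x = a # x'" "z = x' @ b # y"
    by (cases x) auto
  have "rowj_step A (p, x' @ b # (y @ [a])) (q, (y @ [a]) @ x')"
    by (rule rowj_step.intros[OF h(1)]) (use h(2) x' in auto)
  then show "rowj_step A (p, z @ [a]) c" using x' h(4) by simp
next
  assume "rowj_step A (p, z @ [a]) c"
  then obtain x b y q where h: "(p, b, q) \<in> r_rules A" "set x \<subseteq> r_alph A - r_sigma A p"
    "z @ [a] = x @ b # y" "c = (q, y @ x)" by (cases rule: rowj_step.cases) auto
  have "b \<in> r_sigma A p" using h(1) by (auto simp: r_sigma_def)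
  with a have "b \<noteq> a" by auto
  obtain y' where y': "y = y' @ [a]" "z = x @ b # y'"
  proof (cases y rule: rev_exhaust)
    case Nil with h(3) \<open>b \<noteq> a\<close> show ?thesis by simp
  next
    case (snoc ys l) with h(3) that show ?thesis by simp
  qed
  have "rowj_step A (p, (a # x) @ b # y') (q, y' @ (a # x))"
    by (rule rowj_step.intros[OF h(1)]) (use h(2) a in auto)
  then show "rowj_step A (p, a # z) c" using y' h(4) by simp
qed

lemma rot_acc:
  assumes "a \<notin> r_sigma A p" "a \<in> r_alph A"
  shows "racc A p (a # z) \<longleftrightarrow> racc A p (z @ [a])"
  by (rule step_same) (use rot_step[OF assms] in auto)

lemma read_step:
  assumes r: "(p, a, q) \<in> r_rules A" and wf: "rowjfa_wf A"
  shows "rowj_step A (p, a # z) c \<longleftrightarrow> c = (q, z)"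
proof
  assume "rowj_step A (p, a # z) c"
  then obtain x b y q' where h: "(p, b, q') \<in> r_rules A" "set x \<subseteq> r_alph A - r_sigma A p"
    "a # z = x @ b # y" "c = (q', y @ x)" by (cases rule: rowj_step.cases) auto
  have "a \<in> r_sigma A p" using r by (auto simp: r_sigma_def)
  with h(2,3) have "x = []" by (cases x) auto
  with h(3) have "b = a" "y = z" by auto
  with h(1) r wf have "q' = q" by (auto simp: rowjfa_wf_def)
  with h(4) \<open>x = []\<close> \<open>y = z\<close> show "c = (q, z)" by simp
next
  assume "c = (q, z)"
  then show "rowj_step A (p, a # z) c"
    using rowj_step.intros[OF r, of "[]" z] by simp
qed

lemma read_acc:
  assumes "(p, a, q) \<in> r_rules A" "rowjfa_wf A"
  shows "racc A p (a # z) \<longleftrightarrow> racc A q z"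
  using racc_Cons_step[of "a # z" A p] read_step[OF assms] by auto

lemma not_rowj:
  assumes wf: "rowjfa_wf (A :: (nat, nat) rowjfa)" and L: "rowj_lang A = grlowj_lang G1"
  shows False
proof -
  have "[0, 1] \<in> rowj_lang A" using L L_in[of 1] by simp
  then have ab: "0 \<in> r_alph A" "1 \<in> r_alph A" by (auto simp: rowj_lang_def)
  have key: "\<exists>p \<in> r_states A. \<forall>z \<in> lists (r_alph A). racc A p z \<longleftrightarrow> replicate i 0 @ z \<in> grlowj_lang G1" for i
  proof (induction i)
    case 0
    have "r_start A \<in> r_states A" using wf by (simp add: rowjfa_wf_def)
    moreover have "racc A (r_start A) z \<longleftrightarrow> replicate 0 0 @ z \<in> grlowj_lang G1"
      if "z \<in> lists (r_alph A)" for z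
      using that L[symmetric] by (simp add: rowj_lang_def racc_def)
    ultimately show ?case by blast
  next
    case (Suc i)
    then obtain p where p: "p \<in> r_states A"
      "\<And>z. z \<in> lists (r_alph A) \<Longrightarrow> racc A p z \<longleftrightarrow> replicate i 0 @ z \<in> grlowj_lang G1" by blast
    have zl: "replicate (Suc i) 1 \<in> lists (r_alph A)" using ab by auto
    have "0 \<in> r_sigma A p"
    proof (rule ccontr)
      assume "0 \<notin> r_sigma A p"
      from rot_acc[OF this ab(1), of "replicate (Suc i) 1"]
      have "racc A p (0 # replicate (Suc i) 1) = racc A p (replicate (Suc i) 1 @ [0])" .
      moreover have "racc A p (0 # replicate (Suc i) 1)"
        using p(2)[of "0 # replicate (Suc i) 1"] zl ab L_in[of "Suc i"]
        by (simp add: replicate_app_Cons_same)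
      moreover have "\<not> racc A p (replicate (Suc i) 1 @ [0])"
        using p(2)[of "replicate (Suc i) 1 @ [0]"] zl ab L_out2[of i] by simp
      ultimately show False by simp
    qed
    then obtain q where q: "(p, 0, q) \<in> r_rules A" by (auto simp: r_sigma_def)
    then have "q \<in> r_states A" using wf by (auto simp: rowjfa_wf_def)
    moreover have "racc A q z \<longleftrightarrow> replicate (Suc i) 0 @ z \<in> grlowj_lang G1"
      if "z \<in> lists (r_alph A)" for z
      using read_acc[OF q wf, of z] p(2)[of "0 # z"] that ab
      by (simp add: replicate_app_Cons_same)
    ultimately show ?case by blast
  qed
  define f where "f i = (SOME p. p \<in> r_states A \<and> (\<forall>z \<in> lists (r_alph A). racc A p z \<longleftrightarrow> replicate i 0 @ z \<in> grlowj_lang G1))" for i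
  have f: "f i \<in> r_states A \<and> (\<forall>z \<in> lists (r_alph A). racc A (f i) z \<longleftrightarrow> replicate i 0 @ z \<in> grlowj_lang G1)" for i
  proof -
    have "\<exists>p. p \<in> r_states A \<and> (\<forall>z \<in> lists (r_alph A). racc A p z \<longleftrightarrow> replicate i 0 @ z \<in> grlowj_lang G1)"
      using key[of i] by (simp only: Bex_def)
    then show ?thesis unfolding f_def by (rule someI_ex)
  qed
  have "finite (r_states A)" using wf by (simp add: rowjfa_wf_def)
  moreover have "f ` UNIV \<subseteq> r_states A" using f by auto
  ultimately have "finite (f ` UNIV)" by (rule finite_subset[rotated])
  then have "\<not> inj f" using finite_imageD by blast
  then obtain i j where ij: "i \<noteq> j" "f i = f j" by (auto simp: inj_def)
  have zl: "replicate i 1 \<in> lists (r_alph A)" using ab by auto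
  have "racc A (f i) (replicate i 1)" using f[of i] zl L_in[of i] by blast
  then have "racc A (f j) (replicate i 1)" using ij by simp
  then have "replicate j 0 @ replicate i 1 \<in> grlowj_lang G1" using f[of j] zl by blast
  with L_out1[of j i] ij show False by simp
qed

section \<open>Inclusion\<close>

definition toG :: "('a, 'q) rowjfa \<Rightarrow> ('a, 'q) grlowjfa" where
  "toG A = \<lparr>g_alph = r_alph A, g_states = r_states A, g_start = r_start A, g_finals = r_finals A,
            g_rules = (\<lambda>(p, a, q). (p, [a], q)) ` r_rules A\<rparr>"

lemma toG_rules: "(p, w, q) \<in> g_rules (toG A) \<longleftrightarrow> (\<exists>a. w = [a] \<and> (p, a, q) \<in> r_rules A)"
proof
  assume "(p, w, q) \<in> g_rules (toG A)"
  then show "\<exists>a. w = [a] \<and> (p, a, q) \<in> r_rules A" by (auto simp: toG_def)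
next
  assume "\<exists>a. w = [a] \<and> (p, a, q) \<in> r_rules A"
  then obtain a where "w = [a]" "(p, a, q) \<in> r_rules A" by blast
  then show "(p, w, q) \<in> g_rules (toG A)" unfolding toG_def
    by (auto intro: image_eqI[where x = "(p, a, q)"])
qed

lemma toG_avoids: "avoids (toG A) p u \<longleftrightarrow> set u \<inter> r_sigma A p = {}"
proof
  assume h: "avoids (toG A) p u"
  show "set u \<inter> r_sigma A p = {}"
  proof (rule ccontr)
    assume "set u \<inter> r_sigma A p \<noteq> {}"
    then obtain b q where b: "b \<in> set u" "(p, b, q) \<in> r_rules A" by (auto simp: r_sigma_def)
    then have "[b] \<in> g_sigma (toG A) p" by (auto simp: g_sigma_def toG_rules)
    with h b(1) show False by (auto simp: avoids_def sublist_single)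
  qed
next
  assume h: "set u \<inter> r_sigma A p = {}"
  show "avoids (toG A) p u" unfolding avoids_def
  proof
    fix w assume "w \<in> g_sigma (toG A) p"
    then obtain b q where "w = [b]" "(p, b, q) \<in> r_rules A" by (auto simp: g_sigma_def toG_rules)
    with h show "\<not> sublist w u" by (auto simp: sublist_single r_sigma_def)
  qed
qed

lemma toG_wf: "rowjfa_wf A \<Longrightarrow> grlowjfa_wf (toG A)"
proof -
  assume wf: "rowjfa_wf A"
  have "finite (r_rules A)"
    using wf unfolding rowjfa_wf_def by (meson finite_SigmaI finite_subset)
  then show ?thesis using wf unfolding grlowjfa_wf_def rowjfa_wf_def
    by (auto simp: toG_def)
qed

lemma jump1:
  assumes "(p, c, q) \<in> r_rules A" "set u \<inter> r_sigma A p = {}"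
  shows "grlowj_step (toG A) (t, p, u @ c # v) (t @ u, q, v)"
proof -
  have r: "(p, [c], q) \<in> g_rules (toG A)" using assms(1) by (simp add: toG_rules)
  have ov: "\<not> (\<exists>u2 x1. u2 \<noteq> [] \<and> x1 \<noteq> [] \<and> suffix u2 u \<and> prefix x1 [c] \<and> u2 @ x1 = [c])"
    by (auto simp: append_eq_Cons_conv)
  show ?thesis using grlowj_step.jump[OF r _ ov, of t v] assms(2) by (simp add: toG_avoids)
qed

lemma r2g:
  assumes "(rowj_step A)\<^sup>*\<^sup>* (q, w) (qf, [])"
  shows "y @ t = w \<Longrightarrow> (grlowj_step (toG A))\<^sup>*\<^sup>* (t, q, y) ([], qf, [])"
  using assms
proof (induction arbitrary: t y rule: converse_rtranclp_induct2)
  case refl then show ?case by simp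
next
  case (step q w q' w')
  from step.hyps(1) obtain x c z where h: "(q, c, q') \<in> r_rules A" "set x \<subseteq> r_alph A - r_sigma A q"
    "w = x @ c # z" "w' = z @ x" by (cases rule: rowj_step.cases) auto
  from step.prems h(3) have e: "y @ t = x @ c # z" by simp
  show ?case
  proof (cases "length x < length y")
    case True
    with e obtain y' where y': "y = x @ c # y'" "z = y' @ t"
    proof -
      from e True obtain us where us: "y = x @ us" "us @ t = c # z"
        using append_eq_append_conv_if[of y t x "c # z"] by (auto split: if_splits) (metis append_take_drop_id)
      with True obtain y' where "us = c # y'" by (cases us) auto
      with us that show ?thesis by auto
    qed
    have s1: "grlowj_step (toG A) (t, q, x @ c # y') (t @ x, q', y')"
      by (rule jump1[OF h(1)]) (use h(2) in auto)
    have "(grlowj_step (toG A))\<^sup>*\<^sup>* (t @ x, q', y') ([], qf, [])"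
      by (rule step.IH) (simp add: y' h(4))
    with s1 y' show ?thesis by (meson converse_rtranclp_into_rtranclp)
  next
    case False
    with e obtain x' where x': "x = y @ x'" "t = x' @ c # z"
    proof -
      have "x = y @ drop (length y) x \<and> t = drop (length y) x @ c # z"
        using e False append_eq_append_conv_if[of y t x "c # z"] by (auto split: if_splits)
      then show ?thesis using that by blast
    qed
    have s0: "grlowj_step (toG A) (t, q, y) ([], q, t @ y)"
      by (rule grlowj_step.wrap) (use x' h(2) in \<open>auto simp: toG_avoids\<close>)
    have s1: "grlowj_step (toG A) ([], q, x' @ c # (z @ y)) ([] @ x', q', z @ y)"
      by (rule jump1[OF h(1)]) (use h(2) x' in auto)
    have "(grlowj_step (toG A))\<^sup>*\<^sup>* (x', q', z @ y) ([], qf, [])"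
      by (rule step.IH) (simp add: x' h(4))
    with s0 s1 x' show ?thesis by (simp add: converse_rtranclp_into_rtranclp)
  qed
qed

lemma swap_step:
  assumes "set y \<inter> r_sigma A p = {}" "set y \<subseteq> r_alph A" "rowj_step A (p, t @ y) c"
  shows "rowj_step A (p, y @ t) c"
proof -
  from assms(3) obtain x b z q where h: "(p, b, q) \<in> r_rules A" "set x \<subseteq> r_alph A - r_sigma A p"
    "t @ y = x @ b # z" "c = (q, z @ x)" by (cases rule: rowj_step.cases) auto
  have bs: "b \<in> r_sigma A p" using h(1) by (auto simp: r_sigma_def)
  show ?thesis
  proof (cases "length t \<le> length x")
    case True
    then obtain us where "y = us @ b # z"
      using h(3) append_eq_append_conv_if[of t y x "b # z"] by auto
    with bs assms(1) show ?thesis by auto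
  next
    case False
    then obtain us where us: "t = x @ us" "us @ y = b # z"
      using h(3) append_eq_append_conv_if[of t y x "b # z"] by auto (metis append_take_drop_id)
    with False obtain t' where t': "us = b # t'" by (cases us) auto
    have "rowj_step A (p, (y @ x) @ b # t') (q, t' @ (y @ x))"
      by (rule rowj_step.intros[OF h(1)]) (use h(2) assms(1,2) in auto)
    moreover have "z = t' @ y" using us t' by simp
    ultimately show ?thesis using us t' h(4) by simp
  qed
qed

lemma g2r:
  assumes "(grlowj_step (toG A))\<^sup>*\<^sup>* c c'" "c' = ([], qf, [])"
  shows "set (snd (snd c) @ fst c) \<subseteq> r_alph A \<Longrightarrow>
         (rowj_step A)\<^sup>*\<^sup>* (fst (snd c), snd (snd c) @ fst c) (qf, [])"
  using assms
proof (induction rule: converse_rtranclp_induct)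
  case base then show ?case by simp
next
  case (step c c2)
  from step.hyps(1) show ?case
  proof (cases rule: grlowj_step.cases)
    case (jump p x q u t v)
    then obtain b where b: "x = [b]" "(p, b, q) \<in> r_rules A" by (auto simp: toG_rules)
    have IH: "(rowj_step A)\<^sup>*\<^sup>* (q, v @ t @ u) (qf, [])"
      using step.IH step.prems jump by auto
    have "rowj_step A (p, u @ b # (v @ t)) (q, (v @ t) @ u)"
      by (rule rowj_step.intros[OF b(2)]) (use jump step.prems in \<open>auto simp: toG_avoids\<close>)
    with IH jump b show ?thesis by (auto intro: converse_rtranclp_into_rtranclp)
  next
    case (wrap x p y)
    have IH: "(rowj_step A)\<^sup>*\<^sup>* (p, x @ y) (qf, [])"
      using step.IH step.prems wrap by auto
    from IH wrap(3) obtain c3 where c3: "rowj_step A (p, x @ y) c3" "(rowj_step A)\<^sup>*\<^sup>* c3 (qf, [])"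
      by (cases rule: converse_rtranclpE) auto
    have "rowj_step A (p, y @ x) c3"
      by (rule swap_step[OF _ _ c3(1)]) (use wrap step.prems in \<open>auto simp: toG_avoids\<close>)
    with c3(2) wrap show ?thesis by (auto intro: converse_rtranclp_into_rtranclp)
  qed
qed

lemma toG_lang: "rowj_lang A = grlowj_lang (toG A)"
proof
  show "rowj_lang A \<subseteq> grlowj_lang (toG A)"
  proof
    fix w assume "w \<in> rowj_lang A"
    then obtain qf where qf: "w \<in> lists (r_alph A)" "qf \<in> r_finals A"
      "(rowj_step A)\<^sup>*\<^sup>* (r_start A, w) (qf, [])"
      by (auto simp: rowj_lang_def)
    have "(grlowj_step (toG A))\<^sup>*\<^sup>* ([], r_start A, w) ([], qf, [])"
      using r2g[OF qf(3), of w "[]"] by simp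
    with qf show "w \<in> grlowj_lang (toG A)" by (auto simp: grlowj_lang_def toG_def)
  qed
next
  show "grlowj_lang (toG A) \<subseteq> rowj_lang A"
  proof
    fix w assume "w \<in> grlowj_lang (toG A)"
    then obtain qf where qf: "w \<in> lists (r_alph A)" "qf \<in> r_finals A"
      "(grlowj_step (toG A))\<^sup>*\<^sup>* ([], r_start A, w) ([], qf, [])"
      by (auto simp: grlowj_lang_def toG_def)
    have "(rowj_step A)\<^sup>*\<^sup>* (r_start A, w) (qf, [])"
      using g2r[OF qf(3) refl] qf(1) by auto
    with qf show "w \<in> rowj_lang A" by (auto simp: rowj_lang_def)
  qed
qed

theorem lemma1:
  shows "(\<exists>L. L \<in> (GRLOWJ :: nat list set set) \<and> L \<notin> ROWJ) \<and>
         (ROWJ :: nat list set set) \<subset> GRLOWJ"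
proof -
  have sub: "(ROWJ :: nat list set set) \<subseteq> GRLOWJ"
    unfolding ROWJ_def GRLOWJ_def using toG_wf toG_lang by blast
  have inG: "grlowj_lang G1 \<in> (GRLOWJ :: nat list set set)"
    unfolding GRLOWJ_def using G1_wf by blast
  have notR: "grlowj_lang G1 \<notin> (ROWJ :: nat list set set)"
    unfolding ROWJ_def using not_rowj by force
  show ?thesis using sub inG notR by blast
qed

end
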